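(* Let $g(t)=\sum_{n\ge0}g_nt^n$ be a rational function regular for $|t|<1$ having a pole at $t=1$ whose order is maximal among the orders of the poles of $g$. Let $p(t),q(t)$ be polynomials with $q(1)\ne0$, and let $s(t)=p(t)g(t)=\sum_ns_nt^n$ and $d(t)=q(t)g(t)=\sum_nd_nt^n$. Then the limits $$\lim_{t\to1^-}\frac{s(t)}{d(t)},\qquad\lim_{N\to\infty}\frac{\sum_{n\le N}s_n}{\sum_{n\le N}d_n}$$ both exist and equal $p(1)/q(1)$. *)

theory Defs
  imports Complex_Main "HOL-Computational_Algebra.Polynomial_FPS"
begin

definition rat_fun :: "complex poly \<Rightarrow> complex poly \<Rightarrow> complex \<Rightarrow> complex" where
  "rat_fun P Q t = poly P t / poly Q t"

text \<open>Its Taylor series at 0 (meaningful when Q(0) is nonzero).\<close>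
definition rat_fps :: "complex poly \<Rightarrow> complex poly \<Rightarrow> complex fps" where
  "rat_fps P Q = fps_of_poly P / fps_of_poly Q"

end

theory Submission imports Defs "HOL-Computational_Algebra.Computational_Algebra" "HOL-Computational_Algebra.Field_as_Ring" begin

unbundle fps_syntax

definition pbd :: "nat \<Rightarrow> (nat \<Rightarrow> complex) \<Rightarrow> bool" where
  "pbd j f \<longleftrightarrow> (\<exists>C. \<forall>n. norm (f n) \<le> C * (real n + 1) ^ j)"

lemma pbd_mono: assumes "pbd i f" "i \<le> j" shows "pbd j f"
proof -
  obtain C where C: "\<And>n. norm (f n) \<le> C * (real n + 1) ^ i" using assms unfolding pbd_def by blast
  have C0: "C \<ge> 0" using C[of 0] by (smt (verit) norm_ge_zero power_one_right one_power2 mult_cancel_left1 add_0 of_nat_0 power_one)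
  have "norm (f n) \<le> C * (real n + 1) ^ j" for n
  proof -
    have "(real n + 1) ^ i \<le> (real n + 1) ^ j" by (rule power_increasing) (use assms in auto)
    thus ?thesis using C[of n] C0 by (meson mult_left_mono order_trans)
  qed
  thus ?thesis unfolding pbd_def by blast
qed

lemma pbd_add: "pbd j f \<Longrightarrow> pbd j g \<Longrightarrow> pbd j (\<lambda>n. f n + g n)"
  unfolding pbd_def
proof (elim exE)
  fix C D assume C: "\<forall>n. norm (f n) \<le> C * (real n + 1) ^ j" and D: "\<forall>n. norm (g n) \<le> D * (real n + 1) ^ j"
  have "norm (f n + g n) \<le> (C + D) * (real n + 1) ^ j" for n
    using norm_triangle_le[of "f n" "g n"] C D by (simp add: algebra_simps) (smt (verit))
  thus "\<exists>C. \<forall>n. norm (f n + g n) \<le> C * (real n + 1) ^ j" by blast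
qed

lemma pbd_scale: "pbd j f \<Longrightarrow> pbd j (\<lambda>n. c * f n)"
  unfolding pbd_def
proof (elim exE)
  fix C assume C: "\<forall>n. norm (f n) \<le> C * (real n + 1) ^ j"
  have "norm (c * f n) \<le> (norm c * C) * (real n + 1) ^ j" for n
    using C mult_left_mono[of "norm (f n)" _ "norm c"] by (simp add: norm_mult mult.assoc)
  thus "\<exists>C. \<forall>n. norm (c * f n) \<le> C * (real n + 1) ^ j" by blast
qed

lemma conv_abs:
  fixes A B :: "complex fps"
  assumes "pbd j (\<lambda>n. A $ n)" "summable (\<lambda>n. norm (B $ n))"
  shows "pbd j (\<lambda>n. (A * B) $ n)"
proof -
  obtain C where C: "\<And>n. norm (A $ n) \<le> C * (real n + 1) ^ j" using assms unfolding pbd_def by blast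
  have C0: "C \<ge> 0" using C[of 0] by simp (meson norm_ge_zero order_trans)
  define S where "S = (\<Sum>n. norm (B $ n))"
  have S: "(\<Sum>i\<le>n. norm (B $ i)) \<le> S" for n
    unfolding S_def using assms(2) by (intro sum_le_suminf) auto
  have "norm ((A * B) $ n) \<le> (C * S) * (real n + 1) ^ j" for n
  proof -
    have "norm ((A * B) $ n) \<le> (\<Sum>i=0..n. norm (A$i) * norm (B$(n-i)))"
      unfolding fps_mult_nth by (rule order_trans[OF norm_sum]) (simp add: norm_mult)
    also have "\<dots> \<le> (\<Sum>i=0..n. C * (real n + 1) ^ j * norm (B$(n-i)))"
    proof (rule sum_mono)
      fix i assume i: "i \<in> {0..n}"
      have "(real i + 1) ^ j \<le> (real n + 1) ^ j" using i by (intro power_mono) auto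
      hence "norm (A$i) \<le> C * (real n + 1) ^ j" using C[of i] C0 by (meson mult_left_mono order_trans)
      thus "norm (A$i) * norm (B$(n-i)) \<le> C * (real n + 1) ^ j * norm (B$(n-i))"
        by (rule mult_right_mono) simp
    qed
    also have "\<dots> = C * (real n + 1) ^ j * (\<Sum>i=0..n. norm (B$(n-i)))"
      by (simp add: sum_distrib_left)
    also have "(\<Sum>i=0..n. norm (B$(n-i))) = (\<Sum>i\<le>n. norm (B $ i))"
      by (subst sum.atLeastAtMost_rev[of _ 0 n, simplified]) (simp add: atLeast0AtMost)
    also have "C * (real n + 1) ^ j * (\<Sum>i\<le>n. norm (B $ i)) \<le> C * (real n + 1) ^ j * S"
      using S[of n] C0 by (intro mult_left_mono) auto
    finally show ?thesis by (simp add: mult_ac)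
  qed
  thus ?thesis unfolding pbd_def by blast
qed

lemma conv_bdd:
  fixes A B :: "complex fps"
  assumes "pbd j (\<lambda>n. A $ n)" "\<And>n. norm (B $ n) \<le> M"
  shows "pbd (Suc j) (\<lambda>n. (A * B) $ n)"
proof -
  obtain C where C: "\<And>n. norm (A $ n) \<le> C * (real n + 1) ^ j" using assms unfolding pbd_def by blast
  have C0: "C \<ge> 0" using C[of 0] by simp (meson norm_ge_zero order_trans)
  have M0: "M \<ge> 0" using assms(2)[of 0] norm_ge_zero[of "B$0"] by linarith
  have "norm ((A * B) $ n) \<le> (C * M) * (real n + 1) ^ Suc j" for n
  proof -
    have "norm ((A * B) $ n) \<le> (\<Sum>i=0..n. norm (A$i) * norm (B$(n-i)))"
      unfolding fps_mult_nth by (rule order_trans[OF norm_sum]) (simp add: norm_mult)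
    also have "\<dots> \<le> (\<Sum>i=0..n. C * (real n + 1) ^ j * M)"
    proof (rule sum_mono)
      fix i assume i: "i \<in> {0..n}"
      have "(real i + 1) ^ j \<le> (real n + 1) ^ j" using i by (intro power_mono) auto
      hence "norm (A$i) \<le> C * (real n + 1) ^ j" using C[of i] C0 by (meson mult_left_mono order_trans)
      thus "norm (A$i) * norm (B$(n-i)) \<le> C * (real n + 1) ^ j * M"
        using assms(2)[of "n-i"] C0 by (intro mult_mono) auto
    qed
    also have "\<dots> = (C * M) * (real n + 1) ^ Suc j" by (simp add: algebra_simps)
    finally show ?thesis .
  qed
  thus ?thesis unfolding pbd_def by blast
qed

lemma conv_abs':
  fixes A B :: "complex fps"
  assumes "summable (\<lambda>n. norm (A $ n))" "pbd j (\<lambda>n. B $ n)"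
  shows "pbd j (\<lambda>n. (A * B) $ n)"
  using conv_abs[OF assms(2,1)] by (simp add: mult.commute)

lemma summable_poly_coeff: "summable (\<lambda>n. norm (fps_of_poly R $ n))"
  by (rule summable_finite[of "{..degree R}"]) (auto simp: coeff_eq_0)


lemma inv_lin:
  fixes z :: complex assumes "z \<noteq> 0"
  shows "inverse (fps_of_poly [:-z,1:]) = Abs_fps (\<lambda>n. - ((1/z) ^ Suc n))"
proof (rule fps_inverse_unique)
  have e: "fps_of_poly [:-z,1:] = fps_const (-z) + fps_X"
    by (simp add: fps_of_poly_pCons)
  show "fps_of_poly [:-z,1:] * Abs_fps (\<lambda>n. - ((1/z) ^ Suc n)) = 1"
    unfolding e distrib_right
  proof (rule fps_ext)
    fix n show "(fps_const (- z) * Abs_fps (\<lambda>n. - ((1 / z) ^ Suc n)) + fps_X * Abs_fps (\<lambda>n. - ((1 / z) ^ Suc n))) $ n = 1 $ n"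
      using assms by (cases n) (auto simp: field_simps)
  qed
qed

lemma pow_unit:
  fixes z :: complex assumes "cmod z = 1"
  shows "pbd e (\<lambda>n. (inverse (fps_of_poly [:-z,1:]) ^ Suc e) $ n)"
proof -
  have z0: "z \<noteq> 0" using assms by auto
  define G where "G = inverse (fps_of_poly [:-z,1:])"
  have G: "norm (G $ n) \<le> 1" for n
    using assms z0 by (simp add: G_def inv_lin norm_power norm_divide)
  show ?thesis unfolding G_def[symmetric]
  proof (induction e)
    case 0 then show ?case unfolding pbd_def using G by (intro exI[of _ 1]) simp
  next
    case (Suc e)
    have eq: "G ^ Suc (Suc e) = G ^ Suc e * G" by (rule power_Suc2)
    show ?case unfolding eq by (rule conv_bdd[OF Suc G])
  qed
qed

lemma pow_out:
  fixes z :: complex assumes "cmod z > 1"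
  shows "pbd 0 (\<lambda>n. (inverse (fps_of_poly [:-z,1:]) ^ e) $ n)"
proof -
  have z0: "z \<noteq> 0" using assms by auto
  define G where "G = inverse (fps_of_poly [:-z,1:])"
  have G: "norm (G $ n) = (1 / cmod z) ^ Suc n" for n
    using assms z0 by (simp add: G_def inv_lin norm_power norm_divide)
  have "summable (\<lambda>n. (1 / cmod z) * (1 / cmod z) ^ n)"
    using assms by (intro summable_mult summable_geometric) (auto simp: divide_simps)
  hence sG: "summable (\<lambda>n. norm (G $ n))" unfolding G by simp
  show ?thesis unfolding G_def[symmetric]
  proof (induction e)
    case 0 then show ?case unfolding pbd_def by (intro exI[of _ 1]) simp
  next
    case (Suc e)
    have eq: "G ^ Suc e = G ^ e * G" by (rule power_Suc2)
    show ?case unfolding eq by (rule conv_abs[OF Suc sG])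
  qed
qed


lemma BL:
  fixes Q R :: "complex poly" and k :: nat
  assumes "poly Q 0 \<noteq> 0" "\<forall>z. poly Q z = 0 \<longrightarrow> 1 \<le> cmod z"
    "\<forall>z. poly Q z = 0 \<and> cmod z = 1 \<longrightarrow> order z Q \<le> Suc k"
  shows "pbd k (\<lambda>n. (fps_of_poly R * inverse (fps_of_poly Q)) $ n)"
  using assms
proof (induction "degree Q" arbitrary: Q R rule: less_induct)
  case less
  show ?case
  proof (cases "\<exists>z. poly Q z = 0")
    case False
    hence "degree Q = 0" using fundamental_theorem_of_algebra constant_degree by blast
    then obtain c where Qc: "Q = [:c:]" by (meson degree_eq_zeroE)
    with less.prems have c: "c \<noteq> 0" by simp
    have "pbd 0 (\<lambda>n. inverse (fps_of_poly Q) $ n)"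
      unfolding pbd_def Qc fps_of_poly_const fps_const_inverse
      by (intro exI[of _ "norm (inverse c)"]) (auto simp: fps_const_def)
    from conv_abs'[OF summable_poly_coeff this] show ?thesis
      by (rule pbd_mono) simp
  next
    case True
    then obtain z where z: "poly Q z = 0" by blast
    have Q0: "Q \<noteq> 0" using less.prems by auto
    have z0: "z \<noteq> 0" using z less.prems by auto
    define e where "e = order z Q"
    have e1: "e \<ge> 1" using z Q0 order_root[of Q z] unfolding e_def by simp
    obtain Q' where Q': "Q = [:-z,1:] ^ e * Q'" and ndvd: "\<not> [:-z,1:] dvd Q'"
      using order_decomp[OF Q0, of z] unfolding e_def by blast
    define L where "L = [:-z,1:] ^ e"
    have Q'0: "Q' \<noteq> 0" using Q' Q0 by auto
    have degL: "degree L = e" unfolding L_def by (simp add: degree_power_eq)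
    have deg: "degree Q = e + degree Q'" using Q' Q'0 unfolding L_def[symmetric]
      by (metis degL degree_mult_eq mult_eq_0_iff Q0)
    have lt: "degree Q' < degree Q" using deg e1 by simp
    have ordle: "order w Q' \<le> order w Q" for w
      using Q' Q0 order_mult[of "[:-z,1:] ^ e" Q' w] by simp
    have rootQ: "poly Q' w = 0 \<Longrightarrow> poly Q w = 0" for w using Q' by simp
    have p1: "poly Q' 0 \<noteq> 0" using less.prems(1) Q' by auto
    have p2: "\<forall>w. poly Q' w = 0 \<longrightarrow> 1 \<le> cmod w" using less.prems(2) rootQ by blast
    have p3: "\<forall>w. poly Q' w = 0 \<and> cmod w = 1 \<longrightarrow> order w Q' \<le> Suc k"
      using less.prems(3) rootQ ordle le_trans by blast
    have "coprime [:-z,1:] Q'"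
      by (rule prime_elem_imp_coprime[OF prime_elem_linear_field_poly]) (simp_all add: ndvd)
    hence cop: "coprime L Q'" unfolding L_def by simp
    define X Y where "X = fst (bezout_coefficients L Q')" and "Y = snd (bezout_coefficients L Q')"
    have bez: "X * L + Y * Q' = 1" using bezout_coefficients_fst_snd[of L Q'] cop
      unfolding X_def Y_def by (simp add: coprime_iff_gcd_eq_1)
    have L0: "fps_of_poly L $ 0 \<noteq> 0" using z0 unfolding L_def by (simp add: fps_of_poly_power)
    have Q'0': "fps_of_poly Q' $ 0 \<noteq> 0" using p1 by (simp add: poly_0_coeff_0)
    have eq: "fps_of_poly R * inverse (fps_of_poly Q) =
      fps_of_poly (R * X) * inverse (fps_of_poly Q') + fps_of_poly (R * Y) * inverse (fps_of_poly L)"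
    proof -
      have b: "fps_of_poly X * fps_of_poly L + fps_of_poly Y * fps_of_poly Q' = 1"
        using arg_cong[OF bez, of fps_of_poly] by (simp add: fps_of_poly_add fps_of_poly_mult)
      have iL: "fps_of_poly L * inverse (fps_of_poly L) = 1" using L0 by (rule inverse_mult_eq_1')
      have iQ: "fps_of_poly Q' * inverse (fps_of_poly Q') = 1" using Q'0' by (rule inverse_mult_eq_1')
      have "fps_of_poly R * inverse (fps_of_poly Q) = fps_of_poly R * inverse (fps_of_poly L) * inverse (fps_of_poly Q') * 1"
        unfolding Q' L_def[symmetric] by (simp add: fps_of_poly_mult fps_inverse_mult mult_ac)
      also have "\<dots> = fps_of_poly R * inverse (fps_of_poly L) * inverse (fps_of_poly Q') *
          (fps_of_poly X * fps_of_poly L + fps_of_poly Y * fps_of_poly Q')" unfolding b ..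
      also have "\<dots> = fps_of_poly R * fps_of_poly X * inverse (fps_of_poly Q') * (fps_of_poly L * inverse (fps_of_poly L))
          + fps_of_poly R * fps_of_poly Y * inverse (fps_of_poly L) * (fps_of_poly Q' * inverse (fps_of_poly Q'))"
        by (simp add: algebra_simps)
      also have "\<dots> = fps_of_poly (R * X) * inverse (fps_of_poly Q') + fps_of_poly (R * Y) * inverse (fps_of_poly L)"
        unfolding iL iQ by (simp add: fps_of_poly_mult)
      finally show ?thesis .
    qed
    have piece1: "pbd k (\<lambda>n. (fps_of_poly (R * X) * inverse (fps_of_poly Q')) $ n)"
      by (rule less.hyps[OF lt p1 p2 p3])
    have iLe: "inverse (fps_of_poly L) = inverse (fps_of_poly [:-z,1:]) ^ e"
      unfolding L_def by (simp add: fps_of_poly_power fps_inverse_power)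
    have "pbd k (\<lambda>n. inverse (fps_of_poly L) $ n)"
    proof (cases "cmod z = 1")
      case True
      have "e \<le> Suc k" using less.prems(3) z True unfolding e_def by blast
      obtain e' where e': "e = Suc e'" using e1 by (cases e) auto
      show ?thesis unfolding iLe e' using \<open>e \<le> Suc k\<close> e'
        by (intro pbd_mono[OF pow_unit[OF True, of e']]) auto
    next
      case False
      hence "cmod z > 1" using less.prems(2) z by force
      from pow_out[OF this, of e] show ?thesis unfolding iLe by (rule pbd_mono) simp
    qed
    from conv_abs'[OF summable_poly_coeff this]
    have piece2: "pbd k (\<lambda>n. (fps_of_poly (R * Y) * inverse (fps_of_poly L)) $ n)" .
    have "(\<lambda>n. (fps_of_poly (R * X) * inverse (fps_of_poly Q') + fps_of_poly (R * Y) * inverse (fps_of_poly L)) $ n)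
      = (\<lambda>n. (fps_of_poly (R * X) * inverse (fps_of_poly Q')) $ n + (fps_of_poly (R * Y) * inverse (fps_of_poly L)) $ n)"
      by auto
    then show ?thesis unfolding eq by (simp only:) (rule pbd_add[OF piece1 piece2])
  qed
qed


definition Ione :: "complex fps" where "Ione = Abs_fps (\<lambda>_. 1)"

lemma Ione_X: "(1 - fps_X) * Ione = 1"
proof -
  have "Ione * inverse Ione = 1" by (rule inverse_mult_eq_1') (simp add: Ione_def)
  thus ?thesis unfolding Ione_def fps_inverse_gp' by (simp add: mult.commute)
qed

lemma Ione_sum: "(F * Ione) $ N = (\<Sum>n\<le>N. F $ n)"
  unfolding fps_mult_nth Ione_def by (simp add: atLeast0AtMost)

lemma Ione_pow: "(Ione ^ Suc j) $ N = of_nat ((j + N) choose N)"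
proof (induction j arbitrary: N)
  case 0 then show ?case by (simp add: Ione_def)
next
  case (Suc j)
  have "(Ione ^ Suc (Suc j)) $ N = (Ione ^ Suc j * Ione) $ N" by (simp only: power_Suc2)
  also have "\<dots> = (\<Sum>n\<le>N. of_nat ((j + n) choose n))" unfolding Ione_sum Suc ..
  also have "\<dots> = of_nat (\<Sum>n\<le>N. (j + n) choose n)" by simp
  also have "(\<Sum>n\<le>N. (j + n) choose n) = (Suc j + N) choose N" by (subst sum_choose_lower) simp
  finally show ?case .
qed

lemma choose_lower:
  assumes "m \<ge> 1"
  shows "((real N + 1) / real m) ^ m \<le> real ((m + N) choose N)"
proof -
  have "(m + N) choose N = (m + N) choose m"
    using binomial_symmetric[of N "m + N"] by simp
  moreover have "(real (m + N) / real m) ^ m \<le> real ((m + N) choose m)"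
    by (rule binomial_ge_n_over_k_pow_k) simp
  moreover have "((real N + 1) / real m) ^ m \<le> (real (m + N) / real m) ^ m"
    using assms by (intro power_mono divide_right_mono) auto
  ultimately show ?thesis by simp
qed


lemma key_ineq:
  fixes x a cc C2 M b nB nw :: real
  assumes "x > 0" "a > 0" "M > 0" "cc > 0" "b \<ge> x*a/M" "nB \<ge> cc*b - nw" "nw \<le> C2 * a" "x \<ge> 2*M*C2/cc"
  shows "nB \<ge> cc*x*a/(2*M)"
proof -
  have "cc * x \<ge> 2*M*C2" using assms(8,4) by (simp add: field_simps)
  hence "cc * x * a \<ge> 2*M*C2*a" using assms(2) by (intro mult_right_mono) auto
  hence "cc*x*a/M - C2*a \<ge> cc*x*a/(2*M)" using assms(3) by (simp add: field_simps)
  moreover have "cc*b \<ge> cc*x*a/M" using assms(4,5) mult_left_mono[OF assms(5), of cc] by simp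
  ultimately show ?thesis using assms(6,7) by linarith
qed

lemma key2:
  fixes x a cc C1 M nu nB q :: real
  assumes "x > 0" "a > 0" "M > 0" "cc > 0" "q > 0" "nB \<ge> cc*x*a/(2*M)" "nu \<le> C1 * a" "C1 \<ge> 0"
  shows "nu / (q * nB) \<le> (2*M*C1/(q*cc)) / x"
proof -
  have pos: "cc*x*a/(2*M) > 0" using assms by simp
  hence nB: "nB > 0" using assms(6) by linarith
  have "nu / (q * nB) \<le> C1 * a / (q * nB)"
    using assms nB by (intro divide_right_mono) auto
  also have "\<dots> \<le> C1 * a / (q * (cc*x*a/(2*M)))"
    using assms pos nB by (intro divide_left_mono mult_left_mono mult_pos_pos) auto
  also have "\<dots> = (2*M*C1/(q*cc)) / x" using assms by (simp add: field_simps)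
  finally show ?thesis .
qed

theorem mainTheorem9:
  fixes P Q p q :: "complex poly"
  assumes reduced: "coprime P Q"
    and regular: "\<forall>z. cmod z < 1 \<longrightarrow> poly Q z \<noteq> 0"
    and pole1: "poly Q 1 = 0"
    and maxorder: "\<forall>z. poly Q z = 0 \<longrightarrow> order z Q \<le> order 1 Q"
    and q1: "poly q 1 \<noteq> 0"
  defines "sf \<equiv> (\<lambda>t. poly p t * rat_fun P Q t)"
    and "df \<equiv> (\<lambda>t. poly q t * rat_fun P Q t)"
    and "s \<equiv> fps_nth (fps_of_poly p * rat_fps P Q)"
    and "d \<equiv> fps_nth (fps_of_poly q * rat_fps P Q)"
  shows "((\<lambda>x::real. sf (of_real x) / df (of_real x)) \<longlongrightarrow> poly p 1 / poly q 1) (at_left 1) \<and>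
         (\<lambda>N. (\<Sum>n\<le>N. s n) / (\<Sum>n\<le>N. d n)) \<longlonglongrightarrow> poly p 1 / poly q 1"
proof -
  have Q00: "poly Q 0 \<noteq> 0" using regular by simp
  have Qn0: "Q \<noteq> 0" using Q00 by auto
  have P1: "poly P 1 \<noteq> 0"
  proof
    assume "poly P 1 = 0"
    hence "[:-1,1:] dvd P" "[:-1,1:] dvd Q" using pole1 by (simp_all add: poly_eq_0_iff_dvd)
    hence "is_unit [:-1,1::complex:]" using reduced coprime_common_divisor by blast
    thus False by (subst (asm) is_unit_iff_degree) auto
  qed
  show ?thesis
  proof
    show "((\<lambda>x::real. sf (of_real x) / df (of_real x)) \<longlongrightarrow> poly p 1 / poly q 1) (at_left 1)"
    proof -
      have of1: "((\<lambda>x::real. complex_of_real x) \<longlongrightarrow> 1) (at_left 1)"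
        by (rule tendsto_eq_intros) (auto intro: tendsto_ident_at)
      have lim: "((\<lambda>x::real. poly p (of_real x) / poly q (of_real x)) \<longlongrightarrow> poly p 1 / poly q 1) (at_left 1)"
        using q1 by (intro tendsto_divide tendsto_poly of1)
      have eP: "eventually (\<lambda>x::real. poly P (of_real x) \<noteq> 0) (at_left 1)"
        by (rule tendsto_imp_eventually_ne[OF tendsto_poly[OF of1] P1])
      have eq: "eventually (\<lambda>x::real. poly q (of_real x) \<noteq> 0) (at_left 1)"
        by (rule tendsto_imp_eventually_ne[OF tendsto_poly[OF of1] q1])
      have eI: "eventually (\<lambda>x::real. x \<in> {0<..<1}) (at_left 1)"
        by (rule eventually_at_left_real) simp
      have "eventually (\<lambda>x::real. poly p (of_real x) / poly q (of_real x) = sf (of_real x) / df (of_real x)) (at_left 1)"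
        using eP eq eI
      proof eventually_elim
        case (elim x)
        have "cmod (of_real x) < 1" using elim(3) by simp
        hence "poly Q (of_real x) \<noteq> 0" using regular by blast
        thus ?case using elim(1,2) unfolding sf_def df_def rat_fun_def by (simp add: field_simps)
      qed
      from Lim_transform_eventually[OF lim this] show ?thesis .
    qed
    show "(\<lambda>N. (\<Sum>n\<le>N. s n) / (\<Sum>n\<le>N. d n)) \<longlonglongrightarrow> poly p 1 / poly q 1"
    proof -
      define FP where "FP = (fps_of_poly :: complex poly \<Rightarrow> complex fps)"
      define E where "E = inverse (FP Q)"
      define m where "m = order 1 Q"
      define Y where "Y = FP [:-1,1:]"
      define p1 where "p1 = poly p 1"
      define q1' where "q1' = poly q 1"
      have m1: "m \<ge> 1" using pole1 Qn0 order_root[of Q 1] unfolding m_def by simp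
      have QE: "FP Q * E = 1" unfolding E_def FP_def
        by (rule inverse_mult_eq_1') (use Q00 in \<open>simp add: poly_0_coeff_0\<close>)
      have YI: "Y * Ione = -1"
      proof -
        have "Y = - (1 - fps_X)" unfolding Y_def FP_def by (simp add: fps_of_poly_pCons)
        thus ?thesis by (metis Ione_X minus_mult_left)
      qed
      have rat: "rat_fps P Q = FP P * E" unfolding rat_fps_def E_def FP_def
        by (rule fps_divide_unit) (use Q00 in \<open>simp add: poly_0_coeff_0\<close>)
      have BLQ: "pbd (m - 1) (\<lambda>n. (FP R * E) $ n)" for R
        unfolding FP_def E_def
      proof (rule BL)
        show "poly Q 0 \<noteq> 0" by (rule Q00)
        show "\<forall>z. poly Q z = 0 \<longrightarrow> 1 \<le> cmod z" using regular by (auto simp: not_less[symmetric])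
        show "\<forall>z. poly Q z = 0 \<and> cmod z = 1 \<longrightarrow> order z Q \<le> Suc (m - 1)"
          using maxorder m1 unfolding m_def by auto
      qed
      define A where "A = (\<lambda>N. \<Sum>n\<le>N. s n)"
      define B where "B = (\<lambda>N. \<Sum>n\<le>N. d n)"
      have A: "A N = (FP p * FP P * E * Ione) $ N" for N
        unfolding A_def s_def Ione_sum rat by (simp add: mult_ac FP_def)
      have B: "B N = (FP q * FP P * E * Ione) $ N" for N
        unfolding B_def d_def Ione_sum rat by (simp add: mult_ac FP_def)
      define r where "r = smult q1' p - smult p1 q"
      have "poly r 1 = 0" unfolding r_def p1_def q1'_def by simp
      then obtain r' where r': "r = [:-1,1:] * r'" by (auto simp: poly_eq_0_iff_dvd)
      define u where "u = (\<lambda>N. q1' * A N - p1 * B N)"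
      have u: "u N = - (FP (r' * P) * E) $ N" for N
      proof -
        have "FP r * FP P * E * Ione = fps_const q1' * (FP p * FP P * E * Ione) - fps_const p1 * (FP q * FP P * E * Ione)"
          unfolding r_def FP_def by (simp add: fps_of_poly_diff fps_of_poly_smult algebra_simps)
        hence "u N = (FP r * FP P * E * Ione) $ N"
          unfolding u_def A B by (simp only: fps_sub_nth fps_mult_left_const_nth)
        also have "FP r * FP P * E * Ione = (Y * Ione) * (FP (r' * P) * E)"
          unfolding r' Y_def FP_def by (simp add: fps_of_poly_mult mult_ac)
        finally show ?thesis unfolding YI by simp
      qed
      obtain C1 where C1: "\<And>N. norm (u N) \<le> C1 * (real N + 1) ^ (m - 1)"
        using pbd_scale[OF BLQ[of "r' * P"], of "-1"] unfolding pbd_def u by auto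
      obtain Q0 where Q0: "Q = [:-1,1:] ^ m * Q0" and ndvd: "\<not> [:-1,1:] dvd Q0"
        using order_decomp[OF Qn0, of 1] unfolding m_def by auto
      have Q01: "poly Q0 1 \<noteq> 0" using ndvd by (simp add: poly_eq_0_iff_dvd)
      define c where "c = poly (q * P) 1 / poly Q0 1"
      have c0: "c \<noteq> 0" unfolding c_def using Q01 P1 q1 by simp
      have "poly (q * P - smult c Q0) 1 = 0" unfolding c_def using Q01 by simp
      hence "[:-1,1:] dvd (q * P - smult c Q0)" by (simp only: poly_eq_0_iff_dvd)
      then obtain W where W: "q * P - smult c Q0 = [:-1,1:] * W" by (rule dvdE)
      have Q0E: "FP Q0 * E = (-1) ^ m * Ione ^ m"
      proof -
        have "FP Q0 * E = FP Q0 * E * ((-1) * (Y * Ione)) ^ m" unfolding YI by simp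
        also have "((-1) * (Y * Ione)) ^ m = (-1) ^ m * Ione ^ m * Y ^ m"
          by (simp only: power_mult_distrib mult_ac)
        also have "FP Q = Y ^ m * FP Q0"
          unfolding Q0 Y_def FP_def by (simp add: fps_of_poly_mult fps_of_poly_power)
        hence "FP Q0 * E * ((-1) ^ m * Ione ^ m * Y ^ m) = (-1) ^ m * Ione ^ m * (FP Q * E)"
          by (simp add: mult_ac)
        finally show ?thesis unfolding QE by simp
      qed
      have Bfps: "FP q * FP P * E * Ione = fps_const (c * (-1) ^ m) * Ione ^ Suc m - FP W * E"
      proof -
        have "FP q * FP P = fps_const c * FP Q0 + Y * FP W"
          using arg_cong[OF W, of FP] unfolding Y_def FP_def
          by (simp add: fps_of_poly_mult fps_of_poly_diff fps_of_poly_smult algebra_simps)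
        hence "FP q * FP P * E * Ione = fps_const c * (FP Q0 * E) * Ione + FP W * E * (Y * Ione)"
          by (simp add: algebra_simps)
        also have "\<dots> = fps_const (c * (-1) ^ m) * Ione ^ Suc m - FP W * E"
          unfolding Q0E YI by (simp add: algebra_simps poly_const_pow)
        finally show ?thesis .
      qed
      define w where "w = (\<lambda>N. (FP W * E) $ N)"
      obtain C2 where C2: "\<And>N. norm (w N) \<le> C2 * (real N + 1) ^ (m - 1)"
        using BLQ[of W] unfolding pbd_def w_def by auto
      have BN: "B N = c * (-1) ^ m * of_nat ((m + N) choose N) - w N" for N
        unfolding B Bfps w_def by (simp add: Ione_pow[simplified])
      have C1pos: "C1 \<ge> 0" using C1[of 0] by simp (meson norm_ge_zero order_trans)
      have C2pos: "C2 \<ge> 0" using C2[of 0] by simp (meson norm_ge_zero order_trans)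
      define M where "M = real m ^ m"
      have Mpos: "M > 0" unfolding M_def using m1 by simp
      define cc where "cc = cmod c"
      have ccpos: "cc > 0" unfolding cc_def using c0 by simp
      define qq where "qq = cmod q1'"
      have qqpos: "qq > 0" unfolding qq_def q1'_def using q1 by simp
      obtain N0 :: nat where N0: "real N0 \<ge> 2*M*C2/cc" using real_arch_simple by blast
      have ev: "eventually (\<lambda>N. norm (A N / B N - p1/q1') \<le> (2*M*C1/(qq*cc)) / (real N + 1)) sequentially"
        using eventually_ge_at_top[of N0]
      proof eventually_elim
        case (elim N)
        define x where "x = real N + 1"
        define a where "a = x ^ (m - 1)"
        have xpos: "x > 0" unfolding x_def by simp
        have apos: "a > 0" unfolding a_def using xpos by simp
        have xm: "x ^ m = x * a" unfolding a_def using m1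
          by (metis Suc_diff_1 less_le_trans power_Suc zero_less_one)
        have b: "real ((m + N) choose N) \<ge> x * a / M"
          using choose_lower[OF m1, of N] xm unfolding x_def M_def by (simp add: power_divide)
        have "norm (c * (-1) ^ m * of_nat ((m + N) choose N)) - norm (w N) \<le> norm (B N)"
          unfolding BN by (rule norm_triangle_ineq2)
        hence nB: "norm (B N) \<ge> cc * real ((m + N) choose N) - norm (w N)"
          unfolding cc_def by (simp add: norm_mult norm_power)
        have "x \<ge> 2*M*C2/cc" using N0 elim unfolding x_def by linarith
        have nB2: "norm (B N) \<ge> cc*x*a/(2*M)"
          by (rule key_ineq[OF xpos apos Mpos ccpos b nB _ \<open>x \<ge> 2*M*C2/cc\<close>])
            (use C2[of N] in \<open>simp add: a_def x_def\<close>)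
        have "cc*x*a/(2*M) > 0" using ccpos xpos apos Mpos by simp
        hence BN0: "B N \<noteq> 0" using nB2 by auto
        have q10: "q1' \<noteq> 0" using q1 unfolding q1'_def .
        have "A N / B N - p1/q1' = u N / (q1' * B N)" unfolding u_def using q10 BN0 by (simp add: field_simps)
        hence "norm (A N / B N - p1/q1') = norm (u N) / (qq * norm (B N))"
          unfolding qq_def by (simp add: norm_divide norm_mult)
        also have "\<dots> \<le> (2*M*C1/(qq*cc)) / x"
          by (rule key2[OF xpos apos Mpos ccpos qqpos nB2 _ C1pos])
            (use C1[of N] in \<open>simp add: a_def x_def\<close>)
        finally show ?case unfolding x_def .
      qed
      have lim0: "(\<lambda>N. (2*M*C1/(qq*cc)) / (real N + 1)) \<longlonglongrightarrow> 0"
      proof -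
        have "(\<lambda>N. (2*M*C1/(qq*cc)) * inverse (real (Suc N))) \<longlonglongrightarrow> 0"
          by (rule tendsto_mult_right_zero[OF LIMSEQ_inverse_real_of_nat])
        thus ?thesis by (simp add: divide_inverse add.commute)
      qed
      have "(\<lambda>N. norm (A N / B N - p1/q1')) \<longlonglongrightarrow> 0"
        by (rule tendsto_sandwich[OF _ ev tendsto_const lim0]) simp
      hence "(\<lambda>N. A N / B N - p1/q1') \<longlonglongrightarrow> 0" by (rule tendsto_norm_zero_cancel)
      hence "(\<lambda>N. A N / B N) \<longlonglongrightarrow> p1/q1'" by (simp add: LIM_zero_iff)
      thus ?thesis unfolding A_def B_def p1_def q1'_def .
    qed
  qed
qed

end
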